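(* Let $\mathcal F=\{F_x : x\in V(G)\}$ be a representation of a connected triangle-free restricted frame graph $G$ with no full star-cutset. Then the big vertices of $\mathcal F$ form a clique of $G$; in particular, there are at most two big vertices.
   Context: $N[v]=\{v\}\cup N(v)$. A full star-cutset of a connected graph $G$ is a set $N[u]$ whose removal disconnects $G$. A frame is the boundary of an axis-parallel box in $\mathbb R^2$. A representation of $G$ as a restricted frame graph is a family of frames $\{F_x\}$ with $xy\in E(G)$ iff $F_x\cap F_y\neq\emptyset$, satisfying: (1) corners of a frame do not coincide with any point of another frame; (2) the left side of any frame meets no other frame; (3) if the right side of a frame meets a second frame, it meets both the top and the bottom side of that frame; (4) if two frames intersect, no frame is entirely contained in the intersection of the regions bounded by them. A frame $F_1$ contains $F_2$ if they are disjoint and $F_2$ lies in the region bounded by $F_1$. For an induced cycle $C$ of $G$, a vertex $v\in V(C)$ is a big vertex of $C$ (with respect to $\mathcal F$) if $F_v$ contains the frame of every vertex of $V(C)\setminus N[v]$; the big vertices of $\mathcal F$ are the vertices that are big vertices of some induced cycle of $G$. *)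

theory Defs
  imports Main "HOL-Analysis.Analysis"
begin

definition simple_graph :: "'v set \<Rightarrow> ('v \<Rightarrow> 'v \<Rightarrow> bool) \<Rightarrow> bool" where
  "simple_graph V E \<longleftrightarrow> finite V \<and> (\<forall>u v. E u v \<longrightarrow> u \<in> V \<and> v \<in> V \<and> u \<noteq> v \<and> E v u)"

definition connected_in :: "'v set \<Rightarrow> ('v \<Rightarrow> 'v \<Rightarrow> bool) \<Rightarrow> 'v \<Rightarrow> 'v \<Rightarrow> bool" where
  "connected_in S E u v \<longleftrightarrow> (\<lambda>a b. E a b \<and> a \<in> S \<and> b \<in> S)\<^sup>*\<^sup>* u v"

definition graph_connected :: "'v set \<Rightarrow> ('v \<Rightarrow> 'v \<Rightarrow> bool) \<Rightarrow> bool" where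
  "graph_connected V E \<longleftrightarrow> V \<noteq> {} \<and> (\<forall>u\<in>V. \<forall>v\<in>V. connected_in V E u v)"

definition triangle_free :: "'v set \<Rightarrow> ('v \<Rightarrow> 'v \<Rightarrow> bool) \<Rightarrow> bool" where
  "triangle_free V E \<longleftrightarrow> \<not> (\<exists>x\<in>V. \<exists>y\<in>V. \<exists>z\<in>V. E x y \<and> E y z \<and> E x z)"

definition closed_nbhd :: "'v set \<Rightarrow> ('v \<Rightarrow> 'v \<Rightarrow> bool) \<Rightarrow> 'v \<Rightarrow> 'v set" where
  "closed_nbhd V E u = insert u {v \<in> V. E u v}"

definition full_star_cutset :: "'v set \<Rightarrow> ('v \<Rightarrow> 'v \<Rightarrow> bool) \<Rightarrow> 'v \<Rightarrow> bool" where
  "full_star_cutset V E u \<longleftrightarrow> u \<in> V \<and>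
     (\<exists>a \<in> V - closed_nbhd V E u. \<exists>b \<in> V - closed_nbhd V E u.
        \<not> connected_in (V - closed_nbhd V E u) E a b)"

definition clique :: "'v set \<Rightarrow> ('v \<Rightarrow> 'v \<Rightarrow> bool) \<Rightarrow> 'v set \<Rightarrow> bool" where
  "clique V E K \<longleftrightarrow> K \<subseteq> V \<and> (\<forall>u\<in>K. \<forall>v\<in>K. u \<noteq> v \<longrightarrow> E u v)"

definition induced_cycle :: "'v set \<Rightarrow> ('v \<Rightarrow> 'v \<Rightarrow> bool) \<Rightarrow> 'v list \<Rightarrow> bool" where
  "induced_cycle V E cs \<longleftrightarrow> distinct cs \<and> length cs \<ge> 3 \<and> set cs \<subseteq> V \<and>
     (\<forall>i < length cs. \<forall>j < length cs. i \<noteq> j \<longrightarrow>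
        (E (cs ! i) (cs ! j) \<longleftrightarrow> j = Suc i mod length cs \<or> i = Suc j mod length cs))"

text \<open>A frame is the boundary of the axis-parallel box [fx1,fx2] x [fy1,fy2]
  with fx1 < fx2 and fy1 < fy2.\<close>
record frame =
  fx1 :: real
  fx2 :: real
  fy1 :: real
  fy2 :: real

definition valid_frame :: "frame \<Rightarrow> bool" where
  "valid_frame F \<longleftrightarrow> fx1 F < fx2 F \<and> fy1 F < fy2 F"

definition left_side :: "frame \<Rightarrow> (real \<times> real) set" where
  "left_side F = {(fx1 F, y) | y. fy1 F \<le> y \<and> y \<le> fy2 F}"

definition right_side :: "frame \<Rightarrow> (real \<times> real) set" where
  "right_side F = {(fx2 F, y) | y. fy1 F \<le> y \<and> y \<le> fy2 F}"

definition bottom_side :: "frame \<Rightarrow> (real \<times> real) set" where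
  "bottom_side F = {(x, fy1 F) | x. fx1 F \<le> x \<and> x \<le> fx2 F}"

definition top_side :: "frame \<Rightarrow> (real \<times> real) set" where
  "top_side F = {(x, fy2 F) | x. fx1 F \<le> x \<and> x \<le> fx2 F}"

definition frame_pts :: "frame \<Rightarrow> (real \<times> real) set" where
  "frame_pts F = left_side F \<union> right_side F \<union> bottom_side F \<union> top_side F"

definition corners :: "frame \<Rightarrow> (real \<times> real) set" where
  "corners F = {(fx1 F, fy1 F), (fx1 F, fy2 F), (fx2 F, fy1 F), (fx2 F, fy2 F)}"

definition region :: "frame \<Rightarrow> (real \<times> real) set" where
  "region F = {(x, y). fx1 F \<le> x \<and> x \<le> fx2 F \<and> fy1 F \<le> y \<and> y \<le> fy2 F}"

definition frame_contains :: "frame \<Rightarrow> frame \<Rightarrow> bool" where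
  "frame_contains F1 F2 \<longleftrightarrow> frame_pts F1 \<inter> frame_pts F2 = {} \<and> frame_pts F2 \<subseteq> region F1"

definition restricted_frame_rep ::
    "'v set \<Rightarrow> ('v \<Rightarrow> 'v \<Rightarrow> bool) \<Rightarrow> ('v \<Rightarrow> frame) \<Rightarrow> bool" where
  "restricted_frame_rep V E F \<longleftrightarrow>
     (\<forall>x\<in>V. valid_frame (F x)) \<and>
     (\<forall>x\<in>V. \<forall>y\<in>V. x \<noteq> y \<longrightarrow> (E x y \<longleftrightarrow> frame_pts (F x) \<inter> frame_pts (F y) \<noteq> {})) \<and>
     \<comment> \<open>(1) corners of a frame do not coincide with any point of another frame\<close>
     (\<forall>x\<in>V. \<forall>y\<in>V. x \<noteq> y \<longrightarrow> corners (F x) \<inter> frame_pts (F y) = {}) \<and>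
     \<comment> \<open>(2) the left side of any frame meets no other frame\<close>
     (\<forall>x\<in>V. \<forall>y\<in>V. x \<noteq> y \<longrightarrow> left_side (F x) \<inter> frame_pts (F y) = {}) \<and>
     \<comment> \<open>(3) if the right side meets another frame, it meets its top and bottom side\<close>
     (\<forall>x\<in>V. \<forall>y\<in>V. x \<noteq> y \<longrightarrow> right_side (F x) \<inter> frame_pts (F y) \<noteq> {} \<longrightarrow>
        right_side (F x) \<inter> top_side (F y) \<noteq> {} \<and> right_side (F x) \<inter> bottom_side (F y) \<noteq> {}) \<and>
     \<comment> \<open>(4) if two frames intersect, no frame lies within the intersection of their regions\<close>
     (\<forall>x\<in>V. \<forall>y\<in>V. x \<noteq> y \<longrightarrow> frame_pts (F x) \<inter> frame_pts (F y) \<noteq> {} \<longrightarrow>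
        (\<forall>z\<in>V. \<not> frame_pts (F z) \<subseteq> region (F x) \<inter> region (F y)))"

definition big_vertex_of :: "'v set \<Rightarrow> ('v \<Rightarrow> 'v \<Rightarrow> bool) \<Rightarrow> ('v \<Rightarrow> frame) \<Rightarrow> 'v list \<Rightarrow> 'v \<Rightarrow> bool" where
  "big_vertex_of V E F cs v \<longleftrightarrow> v \<in> set cs \<and>
     (\<forall>w \<in> set cs - closed_nbhd V E v. frame_contains (F v) (F w))"

definition big_vertices :: "'v set \<Rightarrow> ('v \<Rightarrow> 'v \<Rightarrow> bool) \<Rightarrow> ('v \<Rightarrow> frame) \<Rightarrow> 'v set" where
  "big_vertices V E F = {v. \<exists>cs. induced_cycle V E cs \<and> big_vertex_of V E F cs v}"

end

theory Submission
  imports Defs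
begin

definition box_open :: "frame \<Rightarrow> (real \<times> real) set" where
  "box_open F = {fx1 F<..<fx2 F} \<times> {fy1 F<..<fy2 F}"

lemma region_eq: "region F = {fx1 F..fx2 F} \<times> {fy1 F..fy2 F}"
  unfolding region_def by auto

lemma open_box_open: "open (box_open F)"
  unfolding box_open_def by (intro open_Times) auto

lemma closed_region: "closed (region F)"
  unfolding region_eq by (intro closed_Times) auto

lemma frame_pts_eq: "valid_frame F \<Longrightarrow> frame_pts F = region F - box_open F"
  unfolding frame_pts_def region_def box_open_def left_side_def right_side_def
    top_side_def bottom_side_def valid_frame_def
  by auto

lemma side_img:
  "left_side F = (\<lambda>y. (fx1 F, y)) ` {fy1 F..fy2 F}"
  "right_side F = (\<lambda>y. (fx2 F, y)) ` {fy1 F..fy2 F}"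
  "bottom_side F = (\<lambda>x. (x, fy1 F)) ` {fx1 F..fx2 F}"
  "top_side F = (\<lambda>x. (x, fy2 F)) ` {fx1 F..fx2 F}"
  unfolding left_side_def right_side_def top_side_def bottom_side_def by auto

lemma conn_sides:
  "connected (left_side F)" "connected (right_side F)"
  "connected (bottom_side F)" "connected (top_side F)"
  unfolding side_img
  by (intro connected_continuous_image continuous_intros; simp)+

lemma connected_frame: assumes "valid_frame F" shows "connected (frame_pts F)"
proof -
  have c1: "(fx1 F, fy1 F) \<in> left_side F \<inter> bottom_side F"
    using assms unfolding valid_frame_def left_side_def bottom_side_def by auto
  have c2: "(fx2 F, fy1 F) \<in> (left_side F \<union> bottom_side F) \<inter> right_side F"
    using assms unfolding valid_frame_def right_side_def bottom_side_def by auto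
  have c3: "(fx1 F, fy2 F) \<in> (left_side F \<union> bottom_side F \<union> right_side F) \<inter> top_side F"
    using assms unfolding valid_frame_def left_side_def top_side_def by auto
  have "connected (left_side F \<union> bottom_side F)"
    using connected_Un[OF conn_sides(1) conn_sides(3)] c1 by blast
  then have "connected (left_side F \<union> bottom_side F \<union> right_side F)"
    using connected_Un[OF _ conn_sides(2)] c2 by blast
  then have "connected (left_side F \<union> bottom_side F \<union> right_side F \<union> top_side F)"
    using connected_Un[OF _ conn_sides(4)] c3 by blast
  moreover have "left_side F \<union> bottom_side F \<union> right_side F \<union> top_side F = frame_pts F"
    unfolding frame_pts_def by auto
  ultimately show ?thesis by simp
qed

lemma inside_lemma:
  assumes "valid_frame A" "valid_frame B" "frame_pts A \<inter> frame_pts B = {}"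
    "frame_pts A \<inter> box_open B \<noteq> {}"
  shows "frame_pts A \<subseteq> box_open B"
proof -
  have fb: "frame_pts B = region B - box_open B" using frame_pts_eq[OF assms(2)] .
  have sub: "frame_pts A \<subseteq> box_open B \<union> (- region B)"
    using assms(3) unfolding fb by blast
  have bo: "box_open B \<subseteq> region B" unfolding box_open_def region_eq
    by (intro Sigma_mono) auto
  have "box_open B \<inter> (- region B) \<inter> frame_pts A = {}"
    using bo by blast
  moreover have "open (- region B)" using closed_region by (simp add: open_Compl)
  ultimately have "box_open B \<inter> frame_pts A = {} \<or> (- region B) \<inter> frame_pts A = {}"
    using connectedD[OF connected_frame[OF assms(1)] open_box_open] sub by blast
  then show ?thesis using assms(4) sub by blast
qed

lemma rep_facts:
  assumes "restricted_frame_rep V E F"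
  shows "\<And>x. x \<in> V \<Longrightarrow> valid_frame (F x)"
    and "\<And>x y. x \<in> V \<Longrightarrow> y \<in> V \<Longrightarrow> x \<noteq> y \<Longrightarrow> E x y \<longleftrightarrow> frame_pts (F x) \<inter> frame_pts (F y) \<noteq> {}"
proof -
  have A: "(\<forall>x\<in>V. valid_frame (F x))" and
    B: "(\<forall>x\<in>V. \<forall>y\<in>V. x \<noteq> y \<longrightarrow> (E x y \<longleftrightarrow> frame_pts (F x) \<inter> frame_pts (F y) \<noteq> {}))"
    using assms unfolding restricted_frame_rep_def by (rule conjunct1, rule conjunct1[OF conjunct2])
  show "\<And>x. x \<in> V \<Longrightarrow> valid_frame (F x)" using A by blast
  show "\<And>x y. x \<in> V \<Longrightarrow> y \<in> V \<Longrightarrow> x \<noteq> y \<Longrightarrow> E x y \<longleftrightarrow> frame_pts (F x) \<inter> frame_pts (F y) \<noteq> {}"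
    using B by blast
qed

lemma all_inside:
  assumes sg: "simple_graph V E" and rep: "restricted_frame_rep V E F"
    and nc: "\<not> full_star_cutset V E v" and vV: "v \<in> V"
    and wS: "w \<in> V - closed_nbhd V E v" and fc: "frame_contains (F v) (F w)"
    and aS: "a \<in> V - closed_nbhd V E v"
  shows "frame_pts (F a) \<subseteq> box_open (F v)"
proof -
  let ?S = "V - closed_nbhd V E v"
  have "\<not> (\<exists>a \<in> ?S. \<exists>b \<in> ?S. \<not> connected_in ?S E a b)"
    using nc vV unfolding full_star_cutset_def by simp
  then have conn: "connected_in ?S E w a" using wS aS by blast
  have vf: "valid_frame (F v)" using rep_facts(1)[OF rep vV] .
  have base0: "frame_pts (F w) \<subseteq> box_open (F v)"
    using fc frame_pts_eq[OF vf] unfolding frame_contains_def by blast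
  have "(\<lambda>a b. E a b \<and> a \<in> ?S \<and> b \<in> ?S)\<^sup>*\<^sup>* w a" using conn unfolding connected_in_def .
  then show ?thesis
  proof (induction rule: rtranclp_induct)
    case base then show ?case using base0 by simp
  next
    case (step b c)
    have bV: "b \<in> V" and cV: "c \<in> V" and Ebc: "E b c" and cS: "c \<in> ?S" using step by auto
    have "b \<noteq> c" using sg Ebc unfolding simple_graph_def by blast
    then have meet: "frame_pts (F c) \<inter> frame_pts (F b) \<noteq> {}"
      using rep_facts(2)[OF rep bV cV] Ebc by blast
    have cv: "c \<noteq> v" "\<not> E v c" using cS unfolding closed_nbhd_def by auto
    then have disj: "frame_pts (F c) \<inter> frame_pts (F v) = {}"
      using rep_facts(2)[OF rep vV cV] by blast
    show ?case
      by (rule inside_lemma[OF rep_facts(1)[OF rep cV] vf disj]) (use meet step.IH in auto)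
  qed
qed

lemma exists_nonnbr:
  assumes sg: "simple_graph V E" and tf: "triangle_free V E"
    and ic: "induced_cycle V E cs" and u: "u \<in> set cs"
  shows "\<exists>w. w \<in> set cs - closed_nbhd V E u"
proof -
  let ?n = "length cs"
  obtain i where i: "i < ?n" "cs ! i = u" using u by (meson in_set_conv_nth)
  have n3: "?n \<ge> 3" and dist: "distinct cs" and sV: "set cs \<subseteq> V"
    using ic unfolding induced_cycle_def by auto
  have adj: "\<And>k l. k < ?n \<Longrightarrow> l < ?n \<Longrightarrow> k \<noteq> l \<Longrightarrow>
      E (cs ! k) (cs ! l) \<longleftrightarrow> l = Suc k mod ?n \<or> k = Suc l mod ?n"
    using ic unfolding induced_cycle_def by blast
  define j where "j = Suc i mod ?n"
  define k where "k = Suc j mod ?n"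
  have jl1: "j < ?n" using n3 unfolding j_def by (intro mod_less_divisor) linarith
  have jl2: "k < ?n" using n3 unfolding k_def by (intro mod_less_divisor) linarith
  note jl = jl1 jl2
  have k2: "k = Suc (Suc i) mod ?n" unfolding k_def j_def by (simp add: mod_Suc_eq)
  have cases3: "(Suc (Suc i) < ?n \<and> j = Suc i \<and> k = Suc (Suc i)) \<or>
      (Suc (Suc i) = ?n \<and> j = Suc i \<and> k = 0) \<or> (Suc i = ?n \<and> j = 0 \<and> k = 1)"
  proof -
    consider "Suc (Suc i) < ?n" | "Suc (Suc i) = ?n" | "Suc i = ?n" using i(1) by linarith
    then show ?thesis
    proof cases
      case 1 then show ?thesis unfolding k2 j_def by simp
    next
      case 2 then show ?thesis unfolding k2 j_def by simp
    next
      case 3 then show ?thesis using n3 unfolding k2 j_def by (simp add: mod_Suc)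
    qed
  qed
  have ij: "i \<noteq> j" and jk: "j \<noteq> k" and ik: "i \<noteq> k" using cases3 n3 by auto
  have E1: "E (cs ! i) (cs ! j)" using adj[OF i(1) jl(1) ij] j_def by blast
  have E2: "E (cs ! j) (cs ! k)" using adj[OF jl(1) jl(2) jk] k_def by blast
  have "\<not> E (cs ! i) (cs ! k)"
  proof
    assume "E (cs ! i) (cs ! k)"
    moreover have "cs ! i \<in> V" "cs ! j \<in> V" "cs ! k \<in> V" using sV i(1) jl by auto
    ultimately show False using tf E1 E2 unfolding triangle_free_def by blast
  qed
  moreover have "cs ! k \<noteq> u" using dist i jl ik nth_eq_iff_index_eq by metis
  moreover have "cs ! k \<in> set cs" using jl by simp
  ultimately show ?thesis using i(2) unfolding closed_nbhd_def by blast
qed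

lemma big_sub: "big_vertices V E F \<subseteq> V"
proof
  fix x assume "x \<in> big_vertices V E F"
  then obtain cs where "induced_cycle V E cs" "x \<in> set cs"
    unfolding big_vertices_def big_vertex_of_def by blast
  moreover have "set cs \<subseteq> V" if "induced_cycle V E cs" for cs
    using that unfolding induced_cycle_def by (elim conjE)
  ultimately show "x \<in> V" by blast
qed

lemma big_clique:
  assumes sg: "simple_graph V E" and tf: "triangle_free V E"
    and rep: "restricted_frame_rep V E F"
    and nc: "\<forall>u\<in>V. \<not> full_star_cutset V E u"
    and u: "u \<in> big_vertices V E F" and v: "v \<in> big_vertices V E F" and uv: "u \<noteq> v"
  shows "E u v"
proof (rule ccontr)
  assume nE: "\<not> E u v"
  have nE': "\<not> E v u" using nE sg unfolding simple_graph_def by blast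
  have uV: "u \<in> V" and vV: "v \<in> V" using u v big_sub[of V E F] by auto
  have key: "frame_pts (F b) \<subseteq> box_open (F a)"
    if a: "a \<in> big_vertices V E F" and bV: "b \<in> V" and ab: "a \<noteq> b" and nab: "\<not> E a b" for a b
  proof -
    obtain cs where ic: "induced_cycle V E cs" and bv: "big_vertex_of V E F cs a"
      using a unfolding big_vertices_def by blast
    have aV: "a \<in> V" using a big_sub[of V E F] by auto
    have acs: "a \<in> set cs" using bv unfolding big_vertex_of_def by blast
    obtain w where w: "w \<in> set cs - closed_nbhd V E a" using exists_nonnbr[OF sg tf ic acs] by blast
    have fc: "frame_contains (F a) (F w)" using bv w unfolding big_vertex_of_def by blast
    have "set cs \<subseteq> V" using ic unfolding induced_cycle_def by (elim conjE)
    then have wV: "w \<in> V - closed_nbhd V E a" using w by blast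
    have bS: "b \<in> V - closed_nbhd V E a" using bV ab nab unfolding closed_nbhd_def by auto
    have "\<not> full_star_cutset V E a" using nc aV by blast
    then show ?thesis using all_inside[OF sg rep _ aV wV fc bS] by blast
  qed
  have A: "frame_pts (F v) \<subseteq> box_open (F u)" using key[OF u vV uv nE] .
  have B: "frame_pts (F u) \<subseteq> box_open (F v)" using key[OF v uV _ nE'] uv by blast
  have "(fx1 (F v), fy1 (F v)) \<in> frame_pts (F v)"
    using rep_facts(1)[OF rep vV] unfolding frame_pts_def left_side_def valid_frame_def by auto
  with A have "fx1 (F u) < fx1 (F v)" unfolding box_open_def by auto
  moreover have "(fx1 (F u), fy1 (F u)) \<in> frame_pts (F u)"
    using rep_facts(1)[OF rep uV] unfolding frame_pts_def left_side_def valid_frame_def by auto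
  with B have "fx1 (F v) < fx1 (F u)" unfolding box_open_def by auto
  ultimately show False by simp
qed

theorem lemma3p9:
  fixes V :: "'v set" and E :: "'v \<Rightarrow> 'v \<Rightarrow> bool" and F :: "'v \<Rightarrow> frame"
  assumes "simple_graph V E"
    and "graph_connected V E"
    and "triangle_free V E"
    and "restricted_frame_rep V E F"
    and "\<forall>u\<in>V. \<not> full_star_cutset V E u"
  shows "clique V E (big_vertices V E F) \<and> card (big_vertices V E F) \<le> 2"
proof -
  let ?B = "big_vertices V E F"
  have cl: "clique V E ?B" unfolding clique_def
  proof (intro conjI ballI impI)
    show "?B \<subseteq> V" by (rule big_sub)
  next
    fix u v assume "u \<in> ?B" "v \<in> ?B" "u \<noteq> v"
    then show "E u v" by (rule big_clique[OF assms(1,3,4,5)])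
  qed
  have fin: "finite ?B" 
  proof (rule finite_subset[OF big_sub])
    show "finite V" using assms(1) unfolding simple_graph_def by (elim conjE)
  qed
  have "card ?B \<le> 2"
  proof (rule ccontr)
    assume "\<not> card ?B \<le> 2"
    then have "3 \<le> card ?B" by simp
    then obtain S where S: "S \<subseteq> ?B" "card S = 3" by (meson obtain_subset_with_card_n)
    then obtain x y z where xyz: "S = {x,y,z}" "x \<noteq> y" "y \<noteq> z" "x \<noteq> z"
      unfolding card_3_iff by blast
    have "x \<in> ?B" "y \<in> ?B" "z \<in> ?B" using S xyz by auto
    then have "x \<in> V" "y \<in> V" "z \<in> V" "E x y" "E y z" "E x z"
      using cl xyz unfolding clique_def by auto
    then show False using assms(3) unfolding triangle_free_def by blast
  qed
  with cl show ?thesis by simp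
qed

end
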